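(* In every finite poset model $\mathcal{F}=(W,\preceq,\mathcal{V})$, the relation $\equiv_\eta$ on $W$ is a weak $\pm$-bisimulation.
   Context: Fix a set PL of proposition letters. A poset model is $\mathcal{F}=(W,\preceq,\mathcal{V})$ with $(W,\preceq)$ a partial order and $\mathcal{V}:\mathrm{PL}\to\mathcal{P}(W)$. $[m;n]=\{i\in\mathbb{N}:m\le i\le n\}$, $[m;n)=\{i:m\le i<n\}$. An undirected path of length $\ell$ from $w$ is $\pi:[0;\ell]\to W$ with $\pi(0)=w$ and, for each $i\in[0;\ell)$, $\pi(i)\preceq\pi(i+1)$ or $\pi(i+1)\preceq\pi(i)$. A $\downarrow$-path is an undirected path of length $\ell\ge1$ with $\pi(\ell)\preceq\pi(\ell-1)$. A $\pm$-path is a $\downarrow$-path of length $\ell\ge2$ with $\pi(0)\preceq\pi(1)$. SLCS$_\eta$ formulas: $\Phi::=p\mid\neg\Phi\mid\Phi_1\wedge\Phi_2\mid\eta(\Phi_1,\Phi_2)$; $w\models p$ iff $w\in\mathcal{V}(p)$; negation, conjunction standard; $w\models\eta(\Phi_1,\Phi_2)$ iff some $\pm$-path $\pi:[0;\ell]\to W$ from $w$ has $\pi(\ell)\models\Phi_2$ and $\pi(i)\models\Phi_1$ for all $i\in[0;\ell)$. $w_1\equiv_\eta w_2$ means $w_1,w_2$ satisfy the same SLCS$_\eta$ formulas. A weak $\pm$-bisimulation is a symmetric relation $B\subseteq W\times W$ such that whenever $B(w_1,w_2)$: (1) for every $p$, $w_1\in\mathcal{V}(p)$ iff $w_2\in\mathcal{V}(p)$;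 (2) for all $u_1,d_1\in W$ with ($w_1\preceq u_1$ or $u_1\preceq w_1$) and $d_1\preceq u_1$, there is a $\pm$-path $\pi_2:[0;\ell_2]\to W$ from $w_2$ with $B(d_1,\pi_2(\ell_2))$ and, for all $j\in[0;\ell_2)$, $B(w_1,\pi_2(j))$ or $B(u_1,\pi_2(j))$. *)

theory Defs
  imports Main
begin

definition poset_model :: "'w set \<Rightarrow> ('w \<Rightarrow> 'w \<Rightarrow> bool) \<Rightarrow> ('p \<Rightarrow> 'w set) \<Rightarrow> bool" where
  "poset_model W le V \<longleftrightarrow>
     (\<forall>x\<in>W. le x x) \<and>
     (\<forall>x\<in>W. \<forall>y\<in>W. le x y \<and> le y x \<longrightarrow> x = y) \<and>
     (\<forall>x\<in>W. \<forall>y\<in>W. \<forall>z\<in>W. le x y \<and> le y z \<longrightarrow> le x z) \<and>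
     (\<forall>p. V p \<subseteq> W)"

definition undirected_path :: "'w set \<Rightarrow> ('w \<Rightarrow> 'w \<Rightarrow> bool) \<Rightarrow> 'w \<Rightarrow> nat \<Rightarrow> (nat \<Rightarrow> 'w) \<Rightarrow> bool" where
  "undirected_path W le w l \<pi> \<longleftrightarrow>
     (\<forall>i\<le>l. \<pi> i \<in> W) \<and> \<pi> 0 = w \<and>
     (\<forall>i<l. le (\<pi> i) (\<pi> (Suc i)) \<or> le (\<pi> (Suc i)) (\<pi> i))"

definition down_path :: "'w set \<Rightarrow> ('w \<Rightarrow> 'w \<Rightarrow> bool) \<Rightarrow> 'w \<Rightarrow> nat \<Rightarrow> (nat \<Rightarrow> 'w) \<Rightarrow> bool" where
  "down_path W le w l \<pi> \<longleftrightarrow>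
     undirected_path W le w l \<pi> \<and> l \<ge> 1 \<and> le (\<pi> l) (\<pi> (l - 1))"

definition pm_path :: "'w set \<Rightarrow> ('w \<Rightarrow> 'w \<Rightarrow> bool) \<Rightarrow> 'w \<Rightarrow> nat \<Rightarrow> (nat \<Rightarrow> 'w) \<Rightarrow> bool" where
  "pm_path W le w l \<pi> \<longleftrightarrow>
     down_path W le w l \<pi> \<and> l \<ge> 2 \<and> le (\<pi> 0) (\<pi> 1)"

datatype 'p slcs = Prop 'p | Neg "'p slcs" | Conj "'p slcs" "'p slcs" | Eta "'p slcs" "'p slcs"

fun sat :: "'w set \<Rightarrow> ('w \<Rightarrow> 'w \<Rightarrow> bool) \<Rightarrow> ('p \<Rightarrow> 'w set) \<Rightarrow> 'w \<Rightarrow> 'p slcs \<Rightarrow> bool" where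
  "sat W le V w (Prop p) = (w \<in> V p)"
| "sat W le V w (Neg \<phi>) = (\<not> sat W le V w \<phi>)"
| "sat W le V w (Conj \<phi> \<psi>) = (sat W le V w \<phi> \<and> sat W le V w \<psi>)"
| "sat W le V w (Eta \<phi> \<psi>) =
     (\<exists>l \<pi>. pm_path W le w l \<pi> \<and> sat W le V (\<pi> l) \<psi> \<and> (\<forall>i<l. sat W le V (\<pi> i) \<phi>))"

definition eta_equiv :: "'w set \<Rightarrow> ('w \<Rightarrow> 'w \<Rightarrow> bool) \<Rightarrow> ('p \<Rightarrow> 'w set) \<Rightarrow> 'w \<Rightarrow> 'w \<Rightarrow> bool" where
  "eta_equiv W le V w1 w2 \<longleftrightarrow>
     w1 \<in> W \<and> w2 \<in> W \<and> (\<forall>\<phi>. sat W le V w1 \<phi> \<longleftrightarrow> sat W le V w2 \<phi>)"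

definition weak_pm_bisim :: "'w set \<Rightarrow> ('w \<Rightarrow> 'w \<Rightarrow> bool) \<Rightarrow> ('p \<Rightarrow> 'w set) \<Rightarrow> ('w \<Rightarrow> 'w \<Rightarrow> bool) \<Rightarrow> bool" where
  "weak_pm_bisim W le V B \<longleftrightarrow>
     (\<forall>x y. B x y \<longrightarrow> x \<in> W \<and> y \<in> W) \<and>
     (\<forall>x y. B x y \<longrightarrow> B y x) \<and>
     (\<forall>w1 w2. B w1 w2 \<longrightarrow>
        (\<forall>p. w1 \<in> V p \<longleftrightarrow> w2 \<in> V p) \<and>
        (\<forall>u1\<in>W. \<forall>d1\<in>W. (le w1 u1 \<or> le u1 w1) \<and> le d1 u1 \<longrightarrow>
           (\<exists>l2 \<pi>2. pm_path W le w2 l2 \<pi>2 \<and> B d1 (\<pi>2 l2) \<and>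
              (\<forall>j<l2. B w1 (\<pi>2 j) \<or> B u1 (\<pi>2 j)))))"

end

theory Submission
  imports Defs
begin
definition tt :: "'p slcs" where "tt = Neg (Conj (Prop undefined) (Neg (Prop undefined)))"
lemma sat_tt[simp]: "sat W le V w tt" by (simp add: tt_def)

lemma char_aux:
  assumes "finite S"
  shows "\<exists>\<phi>. sat W le V x \<phi> \<and> (\<forall>y\<in>S. sat W le V y \<phi> \<longrightarrow> (\<forall>\<psi>. sat W le V x \<psi> \<longleftrightarrow> sat W le V y \<psi>))"
  using assms
proof (induction S rule: finite_induct)
  case empty
  show ?case by (rule exI[of _ tt]) simp
next
  case (insert y S)
  then obtain \<phi> where ph: "sat W le V x \<phi>"
    "\<forall>y\<in>S. sat W le V y \<phi> \<longrightarrow> (\<forall>\<psi>. sat W le V x \<psi> \<longleftrightarrow> sat W le V y \<psi>)" by blast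
  show ?case
  proof (cases "\<forall>\<psi>. sat W le V x \<psi> \<longleftrightarrow> sat W le V y \<psi>")
    case True
    show ?thesis
      apply (rule exI[of _ \<phi>])
      using ph True by blast
  next
    case False
    then obtain \<psi> where n: "sat W le V x \<psi> \<noteq> sat W le V y \<psi>" by blast
    define \<psi>' where "\<psi>' = (if sat W le V x \<psi> then \<psi> else Neg \<psi>)"
    have ps: "sat W le V x \<psi>'" "\<not> sat W le V y \<psi>'"
      using n unfolding \<psi>'_def by auto
    show ?thesis
      apply (rule exI[of _ "Conj \<phi> \<psi>'"])
      using ph ps by simp
  qed
qed
definition Or :: "'p slcs \<Rightarrow> 'p slcs \<Rightarrow> 'p slcs" where "Or a b = Neg (Conj (Neg a) (Neg b))"
lemma sat_Or[simp]: "sat W le V w (Or a b) = (sat W le V w a \<or> sat W le V w b)" by (simp add: Or_def)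

lemma all_le_nat: "(\<forall>i\<le>(n::nat). P i) = (\<forall>i<Suc n. P i)"
  by (auto simp: less_Suc_eq_le)

lemma char_formula:
  assumes "finite W" "x \<in> W"
  shows "\<exists>\<chi>. \<forall>y\<in>W. sat W le V y \<chi> \<longleftrightarrow> eta_equiv W le V x y"
proof -
  obtain \<phi> where ph: "sat W le V x \<phi>"
    "\<forall>y\<in>W. sat W le V y \<phi> \<longrightarrow> (\<forall>\<psi>. sat W le V x \<psi> \<longleftrightarrow> sat W le V y \<psi>)"
    using char_aux[OF assms(1)] by blast
  show ?thesis
  proof (rule exI[of _ \<phi>], intro ballI iffI)
    fix y assume "y \<in> W" "sat W le V y \<phi>"
    then show "eta_equiv W le V x y" using ph(2) assms(2) unfolding eta_equiv_def by blast
  next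
    fix y assume "y \<in> W" "eta_equiv W le V x y"
    then show "sat W le V y \<phi>" using ph(1) unfolding eta_equiv_def by blast
  qed
qed

theorem lemma13:
  fixes W :: "'w set" and le :: "'w \<Rightarrow> 'w \<Rightarrow> bool" and V :: "'p \<Rightarrow> 'w set"
  assumes "poset_model W le V" and "finite W"
  shows "weak_pm_bisim W le V (eta_equiv W le V)"
proof -
  have refl: "\<And>x. x \<in> W \<Longrightarrow> le x x" using assms(1) by (simp add: poset_model_def)
  have main: "\<exists>l2 \<pi>2. pm_path W le w2 l2 \<pi>2 \<and> eta_equiv W le V d1 (\<pi>2 l2) \<and>
              (\<forall>j<l2. eta_equiv W le V w1 (\<pi>2 j) \<or> eta_equiv W le V u1 (\<pi>2 j))"
    if e: "eta_equiv W le V w1 w2" and u: "u1 \<in> W" and d: "d1 \<in> W"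
      and c: "le w1 u1 \<or> le u1 w1" and du: "le d1 u1" for w1 w2 u1 d1
  proof -
    have w1: "w1 \<in> W" and w2: "w2 \<in> W" using e by (auto simp: eta_equiv_def)
    obtain cw where cw: "\<forall>y\<in>W. sat W le V y cw \<longleftrightarrow> eta_equiv W le V w1 y"
      using char_formula[OF assms(2) w1] by blast
    obtain cu where cu: "\<forall>y\<in>W. sat W le V y cu \<longleftrightarrow> eta_equiv W le V u1 y"
      using char_formula[OF assms(2) u] by blast
    obtain cd where cd: "\<forall>y\<in>W. sat W le V y cd \<longleftrightarrow> eta_equiv W le V d1 y"
      using char_formula[OF assms(2) d] by blast
    have "eta_equiv W le V w1 w1" using w1 by (simp add: eta_equiv_def)
    hence sw: "sat W le V w1 cw" using cw w1 by blast
    have "eta_equiv W le V u1 u1" using u by (simp add: eta_equiv_def)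
    hence su: "sat W le V u1 cu" using cu u by blast
    have "eta_equiv W le V d1 d1" using d by (simp add: eta_equiv_def)
    hence sd: "sat W le V d1 cd" using cd d by blast
    have "sat W le V w1 (Eta (Or cw cu) cd)"
      using c
    proof
      assume h: "le w1 u1"
      let ?\<pi> = "(!) [w1, u1, d1]"
      have i2: "\<And>i::nat. i < 2 \<Longrightarrow> i = 0 \<or> i = 1" by arith
      have i3: "\<And>i::nat. i \<le> 2 \<Longrightarrow> i = 0 \<or> i = 1 \<or> i = 2" by arith
      have "pm_path W le w1 2 ?\<pi>"
        unfolding pm_path_def down_path_def undirected_path_def
        using h du w1 u d i2 i3 by (simp add: all_le_nat numeral_2_eq_2 All_less_Suc)
      moreover have "\<forall>i<2. sat W le V (?\<pi> i) (Or cw cu)"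
        using sw su by (simp add: numeral_2_eq_2 All_less_Suc)
      moreover have "sat W le V (?\<pi> 2) cd" using sd by (simp add: numeral_2_eq_2)
      ultimately show ?thesis unfolding sat.simps by blast
    next
      assume h: "le u1 w1"
      let ?\<pi> = "(!) [w1, w1, u1, d1]"
      have i2: "\<And>i::nat. i < 3 \<Longrightarrow> i = 0 \<or> i = 1 \<or> i = 2" by arith
      have i3: "\<And>i::nat. i \<le> 3 \<Longrightarrow> i = 0 \<or> i = 1 \<or> i = 2 \<or> i = 3" by arith
      have "pm_path W le w1 3 ?\<pi>"
        unfolding pm_path_def down_path_def undirected_path_def
        using h du w1 u d i2 i3 refl[OF w1] by (simp add: all_le_nat numeral_3_eq_3 All_less_Suc)
      moreover have "\<forall>i<3. sat W le V (?\<pi> i) (Or cw cu)"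
        using sw su by (simp add: numeral_3_eq_3 All_less_Suc)
      moreover have "sat W le V (?\<pi> 3) cd" using sd by (simp add: numeral_3_eq_3)
      ultimately show ?thesis unfolding sat.simps by blast
    qed
    then have "sat W le V w2 (Eta (Or cw cu) cd)" using e unfolding eta_equiv_def by blast
    then obtain l \<pi> where p: "pm_path W le w2 l \<pi>" "sat W le V (\<pi> l) cd"
      "\<forall>i<l. sat W le V (\<pi> i) (Or cw cu)" by auto
    have inW: "\<And>i. i \<le> l \<Longrightarrow> \<pi> i \<in> W"
      using p(1) by (simp add: pm_path_def down_path_def undirected_path_def)
    show ?thesis
    proof (intro exI[of _ l] exI[of _ \<pi>] conjI allI impI)
      show "pm_path W le w2 l \<pi>" by (rule p(1))
      show "eta_equiv W le V d1 (\<pi> l)" using p(2) inW[of l] cd by blast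
      fix j assume "j < l"
      then show "eta_equiv W le V w1 (\<pi> j) \<or> eta_equiv W le V u1 (\<pi> j)"
        using p(3) inW[of j] cw cu by auto
    qed
  qed
  show ?thesis
    unfolding weak_pm_bisim_def
  proof (intro conjI allI impI ballI)
    fix x y assume "eta_equiv W le V x y"
    then show "x \<in> W" by (simp add: eta_equiv_def)
  next
    fix x y assume "eta_equiv W le V x y"
    then show "y \<in> W" by (simp add: eta_equiv_def)
  next
    fix x y assume "eta_equiv W le V x y"
    then show "eta_equiv W le V y x" unfolding eta_equiv_def by blast
  next
    fix w1 w2 p assume "eta_equiv W le V w1 w2"
    then have "sat W le V w1 (Prop p) = sat W le V w2 (Prop p)" unfolding eta_equiv_def by blast
    then show "w1 \<in> V p \<longleftrightarrow> w2 \<in> V p" by simp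
  next
    fix w1 w2 u1 d1
    assume "eta_equiv W le V w1 w2" "u1 \<in> W" "d1 \<in> W" "(le w1 u1 \<or> le u1 w1) \<and> le d1 u1"
    then show "\<exists>l2 \<pi>2. pm_path W le w2 l2 \<pi>2 \<and> eta_equiv W le V d1 (\<pi>2 l2) \<and>
              (\<forall>j<l2. eta_equiv W le V w1 (\<pi>2 j) \<or> eta_equiv W le V u1 (\<pi>2 j))"
      using main by blast
  qed
qed

end
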